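(* In the curved-exam game described in the context, let $BR_i(x_{-i}):=\arg\max_{x_i\in[0,1]}U_i(x_i,x_{-i})$ and $$C(x_{-i}):=\Big\{0,\ \alpha_i-(1-\alpha_i)\Big(\tfrac{nm}{n-1}-\bar x_{-i}\Big),\ \alpha_i\Big\}\cap[0,1].$$ Then $$BR_i(x_{-i})=\begin{cases}\{\alpha_i\} & \text{if } \frac{nm}{n-1}<\bar x_{-i}\le 1,\\[2pt] \arg\max_{x_i\in C(x_{-i})}U_i(x_i,x_{-i}) & \text{if } \frac{nm-1}{n-1}\le \bar x_{-i}\le\frac{nm}{n-1},\\[2pt] \{\alpha_i-(1-\alpha_i)(\frac{nm}{n-1}-\bar x_{-i})\} & \text{if } \frac{nm}{n-1}-\frac{\alpha_i}{1-\alpha_i}\le\bar x_{-i}<\frac{nm-1}{n-1},\\[2pt] \{0\} & \text{if } 0\le \bar x_{-i}\le \frac{nm}{n-1}-\frac{\alpha_i}{1-\alpha_i}.\end{cases}$$ (Whenever $\bar x_{-i}$ lies in one of the stated sets, $BR_i(x_{-i})$ is as given; some of these sets may be empty.)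
   Context: The curved-exam game: fix $n\ge2$, abilities $\alpha_1,\dots,\alpha_n\in(0,1)$, target mean $m\in(0,1)$. Student $i$ chooses $x_i\in[0,1]$; $x_{-i}=(x_j)_{j\ne i}$; $\bar x=\frac1n\sum_j x_j$, $\bar x_{-i}=\frac1{n-1}\sum_{j\ne i}x_j$. Grade $G_i(x)=x_i+\max(m-\bar x,0)=\max\big(m+\frac{n-1}{n}(x_i-\bar x_{-i}),x_i\big)$ (not truncated at 1); payoff $U_i(x)=G_i(x)^{\alpha_i}(1-x_i)^{1-\alpha_i}$. *)

theory Defs
  imports Complex_Main
begin

text \<open>Players are indexed by 0..<n; a strategy profile is x :: nat => real.\<close>

definition xbar :: "nat \<Rightarrow> (nat \<Rightarrow> real) \<Rightarrow> real" where
  "xbar n x = (\<Sum>j<n. x j) / real n"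

definition xbar_minus :: "nat \<Rightarrow> (nat \<Rightarrow> real) \<Rightarrow> nat \<Rightarrow> real" where
  "xbar_minus n x i = (\<Sum>j\<in>{..<n} - {i}. x j) / (real n - 1)"

definition grade :: "nat \<Rightarrow> real \<Rightarrow> (nat \<Rightarrow> real) \<Rightarrow> nat \<Rightarrow> real" where
  "grade n m x i = x i + max (m - xbar n x) 0"

definition payoff :: "nat \<Rightarrow> (nat \<Rightarrow> real) \<Rightarrow> real \<Rightarrow> (nat \<Rightarrow> real) \<Rightarrow> nat \<Rightarrow> real" where
  "payoff n alpha m x i = grade n m x i powr alpha i * (1 - x i) powr (1 - alpha i)"

definition argmax_on :: "real set \<Rightarrow> (real \<Rightarrow> real) \<Rightarrow> real set" where
  "argmax_on S f = {t \<in> S. \<forall>s\<in>S. f s \<le> f t}"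

definition BR :: "nat \<Rightarrow> (nat \<Rightarrow> real) \<Rightarrow> real \<Rightarrow> (nat \<Rightarrow> real) \<Rightarrow> nat \<Rightarrow> real set" where
  "BR n alpha m x i = argmax_on {0..1} (\<lambda>t. payoff n alpha m (x(i := t)) i)"

definition candC :: "nat \<Rightarrow> (nat \<Rightarrow> real) \<Rightarrow> real \<Rightarrow> (nat \<Rightarrow> real) \<Rightarrow> nat \<Rightarrow> real set" where
  "candC n alpha m x i =
     {0, alpha i - (1 - alpha i) * (real n * m / (real n - 1) - xbar_minus n x i), alpha i} \<inter> {0..1}"

end

theory Submission imports Defs begin
definition psi :: "real \<Rightarrow> real \<Rightarrow> real \<Rightarrow> real" where
  "psi a s t = a * ln (t - s) + (1 - a) * ln (1 - t)"

definition phi :: "real \<Rightarrow> real \<Rightarrow> real \<Rightarrow> real" where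
  "phi a s t = (t - s) powr a * (1 - t) powr (1 - a)"

lemma psi_deriv:
  assumes "s < t" "t < 1"
  shows "DERIV (psi a s) t :> a / (t - s) - (1 - a) / (1 - t)"
proof -
  have "DERIV (\<lambda>z. a * ln (z - s) + (1 - a) * ln (1 - z)) t :> a / (t - s) - (1 - a) / (1 - t)"
    using assms by (auto intro!: derivative_eq_intros simp: divide_simps; simp add: algebra_simps)
  then show ?thesis unfolding psi_def[abs_def] by simp
qed

lemma tstar_bounds:
  fixes a s :: real
  assumes "0<a" "a<1" "s < 1"
  shows "s < a + (1-a)*s" "a + (1-a)*s < 1"
proof -
  have "0 < a * (1 - s)" using assms by (intro mult_pos_pos) auto
  then show "s < a + (1-a)*s" by (simp add: algebra_simps)
  have "(1-a)*s < (1-a)*1" using assms by (intro mult_strict_left_mono) auto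
  then show "a + (1-a)*s < 1" by simp
qed

lemma deriv_sign:
  fixes a s t :: real
  assumes "0<a" "a<1" "s < t" "t < 1"
  shows "a / (t - s) - (1 - a) / (1 - t) > 0 \<longleftrightarrow> t < a + (1-a)*s"
    and "a / (t - s) - (1 - a) / (1 - t) < 0 \<longleftrightarrow> t > a + (1-a)*s"
proof -
  have "t - s > 0" using assms by auto
  moreover have "1 - t > 0" using assms by auto
  ultimately have e: "a / (t - s) - (1 - a) / (1 - t) = (a + (1-a)*s - t) / ((t-s)*(1-t))"
    by (simp add: divide_simps) (simp add: algebra_simps)
  have p: "(t-s)*(1-t) > 0" using assms by simp
  show "a / (t - s) - (1 - a) / (1 - t) > 0 \<longleftrightarrow> t < a + (1-a)*s"
    unfolding e using p by (simp add: zero_less_divide_iff)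
  show "a / (t - s) - (1 - a) / (1 - t) < 0 \<longleftrightarrow> t > a + (1-a)*s"
    unfolding e using p by (simp add: divide_less_0_iff)
qed

lemma phi_psi: assumes "s < t" "t < 1" shows "phi a s t = exp (psi a s t)"
proof -
  have "phi a s t = exp (a * ln (t - s)) * exp ((1 - a) * ln (1 - t))"
    using assms by (simp add: phi_def powr_def)
  also have "\<dots> = exp (psi a s t)" unfolding psi_def exp_add by simp
  finally show ?thesis .
qed

lemma psi_cont:
  assumes "s < u" "v < 1"
  shows "continuous_on {u..v} (psi a s)"
proof (rule DERIV_atLeastAtMost_imp_continuous_on)
  fix x assume "u \<le> x" "x \<le> v"
  then show "\<exists>y. DERIV (psi a s) x :> y" using psi_deriv[of s x a] assms by auto
qed

lemma psi_inc:
  assumes "0<a" "a<1" "s < u" "u < v" "v \<le> a + (1-a)*s" "s < 1"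
  shows "psi a s u < psi a s v"
proof (rule DERIV_pos_imp_increasing_open[OF assms(4)])
  fix x assume "u < x" "x < v"
  moreover have "v < 1" using assms tstar_bounds[of a s] by auto
  ultimately have "s < x" "x < 1" "x < a + (1-a)*s" using assms by auto
  then show "\<exists>y. DERIV (psi a s) x :> y \<and> 0 < y"
    using assms(1,2) psi_deriv deriv_sign(1) by blast
next
  have "v < 1" using assms tstar_bounds[of a s] by auto
  then show "continuous_on {u..v} (psi a s)" using assms psi_cont by auto
qed

lemma psi_dec:
  assumes "0<a" "a<1" "a + (1-a)*s \<le> u" "u < v" "v < 1" "s < 1"
  shows "psi a s v < psi a s u"
proof (rule DERIV_neg_imp_decreasing_open[OF assms(4)])
  have "s < a + (1-a)*s" using assms tstar_bounds[of a s] by auto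
  fix x assume "u < x" "x < v"
  then have "s < x" "x < 1" "x > a + (1-a)*s" using assms \<open>s < a + (1-a)*s\<close> by auto
  then show "\<exists>y. DERIV (psi a s) x :> y \<and> y < 0"
    using assms(1,2) psi_deriv deriv_sign(2) by blast
next
  have "s < a + (1-a)*s" using assms tstar_bounds[of a s] by auto
  then show "continuous_on {u..v} (psi a s)"
    using assms psi_cont by auto
qed

lemma phi_pos: assumes "0<a" "a<1" "s < t" "t < 1" shows "phi a s t > 0"
  using assms by (simp add: phi_def)

lemma phi_inc:
  assumes "0<a" "a<1" "s \<le> u" "u < v" "v \<le> a + (1-a)*s" "s < 1"
  shows "phi a s u < phi a s v"
proof (cases "s = u")
  case True
  have "v < 1" using assms tstar_bounds[of a s] by auto
  then have "phi a s v > 0" using assms True by (intro phi_pos) auto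
  moreover have "phi a s u = 0" using True assms by (simp add: phi_def)
  ultimately show ?thesis by simp
next
  case False
  have "v < 1" using assms tstar_bounds[of a s] by auto
  then show ?thesis using False assms psi_inc[of a s u v] phi_psi[of s u a] phi_psi[of s v a] by auto
qed

lemma phi_dec:
  assumes "0<a" "a<1" "a + (1-a)*s \<le> u" "u < v" "v \<le> 1" "s < 1"
  shows "phi a s v < phi a s u"
proof (cases "v = 1")
  case True
  have "s < u" using assms tstar_bounds[of a s] by auto
  then have "phi a s u > 0" using assms True by (intro phi_pos) auto
  moreover have "phi a s v = 0" using True assms by (simp add: phi_def)
  ultimately show ?thesis by simp
next
  case False
  have "s < u" using assms tstar_bounds[of a s] by auto
  then show ?thesis using False assms psi_dec[of a s u v] phi_psi[of s u a] phi_psi[of s v a] by auto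
qed

lemma argmax_single:
  assumes "t0 \<in> S" "\<And>t. t \<in> S \<Longrightarrow> t \<noteq> t0 \<Longrightarrow> U t < U t0"
  shows "argmax_on S U = {t0}"
  using assms unfolding argmax_on_def by (force simp: less_imp_le)

lemma argmax_cand:
  assumes "C \<subseteq> S" "\<And>t. t \<in> S \<Longrightarrow> t \<notin> C \<Longrightarrow> \<exists>c\<in>C. U t < U c"
  shows "argmax_on S U = argmax_on C U"
proof
  show "argmax_on S U \<subseteq> argmax_on C U"
  proof
    fix t assume t: "t \<in> argmax_on S U"
    have "t \<in> C"
    proof (rule ccontr)
      assume "t \<notin> C"
      moreover have "t \<in> S" using t unfolding argmax_on_def by auto
      ultimately obtain c where "c \<in> C" "U t < U c" using assms(2) by blast
      then show False using t assms(1) unfolding argmax_on_def by force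
    qed
    then show "t \<in> argmax_on C U" using t assms(1) unfolding argmax_on_def by auto
  qed
next
  show "argmax_on C U \<subseteq> argmax_on S U"
  proof
    fix t assume t: "t \<in> argmax_on C U"
    have "U r \<le> U t" if rS: "r \<in> S" for r
    proof (cases "r \<in> C")
      case True then show ?thesis using t unfolding argmax_on_def by auto
    next
      case False
      then obtain c where "c \<in> C" "U r < U c" using assms(2)[OF rS False] by blast
      then show ?thesis using t unfolding argmax_on_def by force
    qed
    then show "t \<in> argmax_on S U" using t assms(1) unfolding argmax_on_def by auto
  qed
qed

locale absgame =
  fixes a s N K :: real and U :: "real \<Rightarrow> real"
  assumes a0: "0 < a" and a1: "a < 1" and N1: "N \<ge> 1" and K0: "K > 0"
    and Uc: "\<And>t. 0 \<le> t \<Longrightarrow> t \<le> 1 \<Longrightarrow> t \<le> -N*s \<Longrightarrow> U t = K * phi a s t"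
    and Uf: "\<And>t. 0 \<le> t \<Longrightarrow> t \<le> 1 \<Longrightarrow> -N*s \<le> t \<Longrightarrow> U t = phi a 0 t"
begin

lemma phi0_max:
  assumes "0 \<le> t" "t \<le> 1" "t \<noteq> a" shows "phi a 0 t < phi a 0 a"
proof (cases "t < a")
  case True then show ?thesis using phi_inc[of a 0 t a] a0 a1 assms by auto
next
  case False then show ?thesis using phi_dec[of a 0 a t] a0 a1 assms by auto
qed

lemma case1: assumes "s > 0" shows "argmax_on {0..1} U = {a}"
proof (rule argmax_single)
  show "a \<in> {0..1}" using a0 a1 by auto
  have T: "-N*s < 0" using assms N1 by (simp add: mult_pos_pos)
  fix t assume "t \<in> {0..1}" "t \<noteq> a"
  then show "U t < U a" using Uf[of t] Uf[of a] T a0 a1 phi0_max[of t] by auto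
qed

lemma case3: assumes "-a/(1-a) \<le> s" "s < -1/N"
  shows "argmax_on {0..1} U = {a + (1-a)*s}"
proof -
  have "-1/N < 0" using N1 by simp
  then have s0: "s < 0" using assms by linarith
  have T: "-N*s > 1" using assms N1 by (simp add: field_simps)
  have "(1-a)*s \<ge> -a" using assms a0 a1 by (simp add: field_simps)
  then have ts0: "a + (1-a)*s \<ge> 0" by simp
  have ts1: "a + (1-a)*s < 1" using tstar_bounds[of a s] a0 a1 s0 by auto
  show ?thesis
  proof (rule argmax_single)
    show "a + (1-a)*s \<in> {0..1}" using ts0 ts1 by auto
    fix t assume t: "t \<in> {0..1}" "t \<noteq> a + (1-a)*s"
    have "phi a s t < phi a s (a + (1-a)*s)"
    proof (cases "t < a + (1-a)*s")
      case True then show ?thesis using phi_inc[of a s t "a + (1-a)*s"] a0 a1 s0 t by auto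
    next
      case False then show ?thesis using phi_dec[of a s "a + (1-a)*s" t] a0 a1 s0 t by auto
    qed
    then show "U t < U (a + (1-a)*s)" using Uc[of t] Uc[of "a + (1-a)*s"] t T ts0 ts1 K0 by auto
  qed
qed

lemma case4: assumes "s \<le> -a/(1-a)"
  shows "argmax_on {0..1} U = {0}"
proof -
  have q: "a/(1-a) > a" using a0 a1 by (simp add: field_simps)
  have "-a/(1-a) < 0" using a0 a1 by simp
  then have s0: "s < 0" using assms by linarith
  have "N*(-s) \<ge> 1*(-s)" using N1 s0 by (intro mult_right_mono) auto
  then have T: "-N*s \<ge> -s" by simp
  have Ta: "-N*s > a" using T assms q by linarith
  have "(1-a)*s \<le> -a" using assms a0 a1 by (simp add: field_simps)
  then have ts0: "a + (1-a)*s \<le> 0" by simp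
  show ?thesis
  proof (rule argmax_single)
    show "(0::real) \<in> {0..1}" by auto
    fix t :: real assume t: "t \<in> {0..1}" "t \<noteq> 0"
    show "U t < U 0"
    proof (cases "t \<le> -N*s")
      case True
      have "phi a s t < phi a s 0" using phi_dec[of a s 0 t] a0 a1 s0 t ts0 by auto
      then show ?thesis using Uc[of t] Uc[of 0] True t Ta a0 K0 by auto
    next
      case False
      have "phi a 0 t < phi a 0 (-N*s)" using phi_dec[of a 0 "-N*s" t] a0 a1 t False Ta by auto
      moreover have "U (-N*s) = phi a 0 (-N*s)" using Uf[of "-N*s"] t False Ta a0 by auto
      moreover have "U (-N*s) = K * phi a s (-N*s)" using Uc[of "-N*s"] t False Ta a0 by auto
      moreover have pd: "phi a s (-N*s) < phi a s 0" using phi_dec[of a s 0 "-N*s"] a0 a1 s0 t ts0 Ta False by auto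
      moreover have "K * phi a s (-N*s) < K * phi a s 0" using pd K0 by simp
      moreover have "U 0 = K * phi a s 0" using Uc[of 0] Ta a0 by auto
      moreover have "U t = phi a 0 t" using Uf[of t] False t by auto
      ultimately show ?thesis by linarith
    qed
  qed
qed

lemma case2: assumes "-1/N \<le> s" "s \<le> 0"
  shows "argmax_on {0..1} U = argmax_on ({0, a + (1-a)*s, a} \<inter> {0..1}) U"
proof (rule argmax_cand)
  define ts where "ts = a + (1-a)*s"
  define T where "T = -N*s"
  define c0 where "c0 = max ts 0"
  have T0: "T \<ge> 0" unfolding T_def using assms N1 by (simp add: mult_nonneg_nonpos)
  have "N * s \<ge> N * (-1/N)" using assms N1 by (intro mult_left_mono) auto
  then have T1: "T \<le> 1" unfolding T_def using N1 by simp
  have "(1-a)*s \<le> 0" using a1 assms by (simp add: mult_nonneg_nonpos)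
  then have tsa: "ts \<le> a" unfolding ts_def by simp
  have ts1: "ts < 1" unfolding ts_def using tstar_bounds[of a s] a0 a1 assms by auto
  have c0C: "c0 \<in> {0, a + (1-a)*s, a} \<inter> {0..1}" unfolding c0_def ts_def[symmetric] using ts1 by auto
  have aC: "a \<in> {0, a + (1-a)*s, a} \<inter> {0..1}" using a0 a1 by auto
  have c0a: "c0 \<le> a" "0 \<le> c0" "ts \<le> c0" "c0 \<le> 1" unfolding c0_def using tsa a0 a1 ts1 by auto
  have sT: "s < 0" if "0 < T" using that unfolding T_def using N1 by (cases "s < 0") (auto, smt (verit) mult_nonneg_nonneg)
  show "{0, a + (1-a)*s, a} \<inter> {0..1} \<subseteq> {0..1}" by auto
  fix t assume t: "t \<in> {0..1}" "t \<notin> {0, a + (1-a)*s, a} \<inter> {0..1}"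
  then have t0: "0 < t" "t \<le> 1" "t \<noteq> ts" "t \<noteq> a" unfolding ts_def by auto
  show "\<exists>c\<in>{0, a + (1-a)*s, a} \<inter> {0..1}. U t < U c"
  proof (cases "T \<le> t")
    case tT: True
    show ?thesis
    proof (cases "T \<le> a")
      case True
      have "U t < U a" using Uf[of t] Uf[of a] tT True t0 a0 a1 phi0_max[of t] unfolding T_def by auto
      then show ?thesis using aC by blast
    next
      case False
      then have s0: "s < 0" using sT a0 by auto
      have "phi a 0 t \<le> phi a 0 T"
      proof (cases "t = T")
        case False then show ?thesis using phi_dec[of a 0 T t] a0 a1 tT t0 \<open>\<not> T \<le> a\<close> by auto
      qed simp
      moreover have "U t = phi a 0 t" using Uf[of t] tT t0 unfolding T_def by auto
      moreover have "phi a 0 T = K * phi a s T" using Uf[of T] Uc[of T] T0 T1 unfolding T_def by auto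
      moreover have "phi a s T < phi a s c0" using phi_dec[of a s c0 T] a0 a1 s0 c0a False T1 unfolding ts_def by auto
      then have "K * phi a s T < K * phi a s c0" using K0 by simp
      moreover have "U c0 = K * phi a s c0" using Uc[of c0] c0a False unfolding T_def by auto
      ultimately have "U t < U c0" by linarith
      then show ?thesis using c0C by blast
    qed
  next
    case tT: False
    then have s0: "s < 0" using sT t0 by auto
    have Ut: "U t = K * phi a s t" using Uc[of t] tT t0 unfolding T_def by auto
    show ?thesis
    proof (cases "ts \<le> T")
      case True
      have "phi a s t < phi a s c0"
      proof (cases "t < c0")
        case True
        then have "c0 = ts" unfolding c0_def using t0 by auto
        then show ?thesis using phi_inc[of a s t ts] True a0 a1 s0 t0 unfolding ts_def by auto
      next
        case False
        then have "c0 < t" using t0 unfolding c0_def by auto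
        then show ?thesis using phi_dec[of a s c0 t] a0 a1 s0 t0 c0a unfolding ts_def by auto
      qed
      then have "K * phi a s t < K * phi a s c0" using K0 by simp
      moreover have "U c0 = K * phi a s c0" using Uc[of c0] c0a True T0 unfolding T_def c0_def by auto
      ultimately have "U t < U c0" using Ut by linarith
      then show ?thesis using c0C by blast
    next
      case False
      have "phi a s t < phi a s T" using phi_inc[of a s t T] a0 a1 s0 t0 tT False unfolding ts_def by auto
      then have "K * phi a s t < K * phi a s T" using K0 by simp
      moreover have "phi a 0 T = K * phi a s T" using Uf[of T] Uc[of T] T0 T1 unfolding T_def by auto
      moreover have "phi a 0 T < phi a 0 a" using phi0_max[of T] T0 T1 False tsa by auto
      moreover have "U a = phi a 0 a" using Uf[of a] False tsa a0 a1 unfolding T_def by auto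
      ultimately have "U t < U a" using Ut by linarith
      then show ?thesis using aC by blast
    qed
  qed
qed

end
theorem mainTheorem6:
  fixes n :: nat and alpha :: "nat \<Rightarrow> real" and m :: real and x :: "nat \<Rightarrow> real" and i :: nat
  assumes "n \<ge> 2"
    and "\<forall>j<n. 0 < alpha j \<and> alpha j < 1"
    and "0 < m" and "m < 1"
    and "i < n"
    and "\<forall>j<n. j \<noteq> i \<longrightarrow> 0 \<le> x j \<and> x j \<le> 1"
  shows "(real n * m / (real n - 1) < xbar_minus n x i \<and> xbar_minus n x i \<le> 1 \<longrightarrow>
            BR n alpha m x i = {alpha i})
       \<and> ((real n * m - 1) / (real n - 1) \<le> xbar_minus n x i
            \<and> xbar_minus n x i \<le> real n * m / (real n - 1) \<longrightarrow>
            BR n alpha m x i = argmax_on (candC n alpha m x i) (\<lambda>t. payoff n alpha m (x(i := t)) i))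
       \<and> (real n * m / (real n - 1) - alpha i / (1 - alpha i) \<le> xbar_minus n x i
            \<and> xbar_minus n x i < (real n * m - 1) / (real n - 1) \<longrightarrow>
            BR n alpha m x i = {alpha i - (1 - alpha i) * (real n * m / (real n - 1) - xbar_minus n x i)})
       \<and> (0 \<le> xbar_minus n x i
            \<and> xbar_minus n x i \<le> real n * m / (real n - 1) - alpha i / (1 - alpha i) \<longrightarrow>
            BR n alpha m x i = {0})"
proof -
  define a where "a = alpha i"
  define y where "y = xbar_minus n x i"
  define N where "N = real n - 1"
  define P where "P = real n * m / N"
  define sv where "sv = y - P"
  define k where "k = N / real n"
  define U where "U = (\<lambda>t. payoff n alpha m (x(i := t)) i)"
  have a0: "0 < a" "a < 1" using assms(2,5) unfolding a_def by auto
  have N1: "N \<ge> 1" unfolding N_def using assms(1) by simp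
  have n0: "real n > 0" using assms(1) by simp
  have nN: "real n = N + 1" unfolding N_def by simp
  have k0: "k > 0" unfolding k_def using N1 n0 by simp
  have sumx: "(\<Sum>j<n. (x(i := t)) j) = t + N * y" for t
  proof -
    have "(\<Sum>j<n. (x(i := t)) j) = (x(i := t)) i + (\<Sum>j\<in>{..<n} - {i}. (x(i := t)) j)"
      using assms(5) by (subst sum.remove[of _ i]) auto
    also have "(\<Sum>j\<in>{..<n} - {i}. (x(i := t)) j) = (\<Sum>j\<in>{..<n} - {i}. x j)"
      by (rule sum.cong) auto
    also have "(\<Sum>j\<in>{..<n} - {i}. x j) = N * y"
      unfolding y_def xbar_minus_def N_def using N1 unfolding N_def by simp
    finally show ?thesis by simp
  qed
  have grade_eq: "grade n m (x(i := t)) i = t + max (m - (t + N * y) / real n) 0" for t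
    unfolding grade_def xbar_def sumx by simp
  have PN: "N * P = real n * m" unfolding P_def using N1 by simp
  have Uc: "U t = k powr a * phi a sv t" if t: "0 \<le> t" "t \<le> 1" "t \<le> -N*sv" for t
  proof -
    have "t + N*y \<le> real n * m" using t(3) PN unfolding sv_def by (simp add: algebra_simps)
    then have "m - (t + N * y) / real n \<ge> 0" using n0 by (simp add: field_simps)
    then have "grade n m (x(i := t)) i = t + (m - (t + N * y) / real n)" unfolding grade_eq by simp
    also have "\<dots> = k * (t - sv)"
      unfolding k_def sv_def using n0 PN nN by (simp add: field_simps)
    finally have g: "grade n m (x(i := t)) i = k * (t - sv)" .
    have "k * (t - sv) \<ge> 0"
      using g \<open>m - (t + N * y) / real n \<ge> 0\<close> t unfolding grade_eq by linarith
    then have ts: "t - sv \<ge> 0" using k0 by (simp add: zero_le_mult_iff)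
    show ?thesis unfolding U_def payoff_def g using k0 ts
      by (simp add: powr_mult phi_def a_def)
  qed
  have Uf: "U t = phi a 0 t" if t: "0 \<le> t" "t \<le> 1" "-N*sv \<le> t" for t
  proof -
    have "t + N*y \<ge> real n * m" using t(3) PN unfolding sv_def by (simp add: algebra_simps)
    then have "m - (t + N * y) / real n \<le> 0" using n0 by (simp add: field_simps)
    then have g: "grade n m (x(i := t)) i = t" unfolding grade_eq by simp
    show ?thesis unfolding U_def payoff_def g by (simp add: phi_def a_def)
  qed
  interpret G: absgame a sv N "k powr a" U
    using a0 N1 k0 Uc Uf by unfold_locales auto
  have BR_eq: "BR n alpha m x i = argmax_on {0..1} U" unfolding BR_def U_def ..
  have PP: "(real n * m - 1) / (real n - 1) = P - 1/N" unfolding P_def N_def by (simp add: diff_divide_distrib)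
  have ts_eq: "alpha i - (1 - alpha i) * (real n * m / (real n - 1) - xbar_minus n x i) = a + (1-a)*sv"
    unfolding a_def sv_def P_def N_def y_def by (simp add: algebra_simps)
  have c_eq: "candC n alpha m x i = {0, a + (1-a)*sv, a} \<inter> {0..1}"
    unfolding candC_def ts_eq by (simp add: a_def)
  show ?thesis
    unfolding BR_eq c_eq ts_eq PP U_def[symmetric]
    unfolding P_def[symmetric] N_def[symmetric] y_def[symmetric] a_def[symmetric]
    using G.case1 G.case2 G.case3 G.case4 unfolding sv_def by auto
qed

end
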